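(* Let $\mathcal{B}$ be a $\sigma$-algebra on a nonempty set $E$ and let $\nu$ be an essential $\sigma$-maxitive measure on $\mathcal{B}$. Then $\nu$ is autocontinuous. Moreover, if the empty set is the only $\nu$-negligible subset of $E$, then $\nu$ has a cardinal density, i.e. there is a map $c:E\to[0,\infty]$ with $\nu(B)=\sup_{x\in B}c(x)$ for all $B\in\mathcal{B}$.
   Context: A maxitive measure on $\mathcal{B}$ is a map $\nu:\mathcal{B}\to[0,\infty]$ with $\nu(\emptyset)=0$ and $\nu(B\cup B')=\max(\nu(B),\nu(B'))$; it is $\sigma$-maxitive if moreover it is continuous from below: $\nu(\bigcup_n B_n)=\lim_n\nu(B_n)$ for every nondecreasing sequence $B_1\subset B_2\subset\cdots$ in $\mathcal{B}$. $\nu$ is essential if there exists a $\sigma$-finite $\sigma$-additive measure $m$ on $\mathcal{B}$ such that $\nu(B)>0\iff m(B)>0$ for all $B\in\mathcal{B}$. A subset $N\subset E$ is $\nu$-negligible if $N\subset G$ for some $G\in\mathcal{B}$ with $\nu(G)=0$. A map $f:E\to[0,\infty]$ is $\mathcal{B}$-measurable if $\{f>t\}\in\mathcal{B}$ for all $t\geq0$. The $\nu$-essential supremum is $\bigoplus^{\nu}_{x\in B}f(x)=\inf\{t>0:B\cap\{f>t\}\text{ is }\nu\text{-negligible}\}$. $\nu$ is autocontinuous if there is a $\mathcal{B}$-measurable $f:E\to[0,\infty]$ with $\nu(B)=\bigoplus^{\nu}_{x\in B}f(x)$ for all $B\in\mathcal{B}$. *)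

theory Defs
  imports "HOL-Analysis.Analysis"
begin

definition maxitive :: "'a set set \<Rightarrow> ('a set \<Rightarrow> ennreal) \<Rightarrow> bool" where
  "maxitive B \<nu> \<longleftrightarrow> \<nu> {} = 0 \<and> (\<forall>A\<in>B. \<forall>C\<in>B. \<nu> (A \<union> C) = max (\<nu> A) (\<nu> C))"

definition sigma_maxitive :: "'a set set \<Rightarrow> ('a set \<Rightarrow> ennreal) \<Rightarrow> bool" where
  "sigma_maxitive B \<nu> \<longleftrightarrow> maxitive B \<nu> \<and>
     (\<forall>Bs :: nat \<Rightarrow> 'a set. range Bs \<subseteq> B \<longrightarrow> incseq Bs \<longrightarrow>
        (\<lambda>n. \<nu> (Bs n)) \<longlonglongrightarrow> \<nu> (\<Union>n. Bs n))"

definition essential :: "'a set \<Rightarrow> 'a set set \<Rightarrow> ('a set \<Rightarrow> ennreal) \<Rightarrow> bool" where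
  "essential E B \<nu> \<longleftrightarrow> (\<exists>m. space m = E \<and> sets m = B \<and> sigma_finite_measure m \<and>
      (\<forall>A\<in>B. 0 < \<nu> A \<longleftrightarrow> 0 < emeasure m A))"

definition negligible :: "'a set set \<Rightarrow> ('a set \<Rightarrow> ennreal) \<Rightarrow> 'a set \<Rightarrow> bool" where
  "negligible B \<nu> N \<longleftrightarrow> (\<exists>G\<in>B. N \<subseteq> G \<and> \<nu> G = 0)"

definition B_measurable :: "'a set \<Rightarrow> 'a set set \<Rightarrow> ('a \<Rightarrow> ennreal) \<Rightarrow> bool" where
  "B_measurable E B f \<longleftrightarrow> (\<forall>t\<ge>0. {x\<in>E. t < f x} \<in> B)"

definition ess_sup_nu :: "'a set \<Rightarrow> 'a set set \<Rightarrow> ('a set \<Rightarrow> ennreal) \<Rightarrow> 'a set \<Rightarrow> ('a \<Rightarrow> ennreal) \<Rightarrow> ennreal" where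
  "ess_sup_nu E B \<nu> A f = Inf {t. 0 < t \<and> negligible B \<nu> (A \<inter> {x\<in>E. t < f x})}"

definition autocontinuous :: "'a set \<Rightarrow> 'a set set \<Rightarrow> ('a set \<Rightarrow> ennreal) \<Rightarrow> bool" where
  "autocontinuous E B \<nu> \<longleftrightarrow> (\<exists>f. B_measurable E B f \<and> (\<forall>A\<in>B. \<nu> A = ess_sup_nu E B \<nu> A f))"

definition has_cardinal_density :: "'a set set \<Rightarrow> ('a set \<Rightarrow> ennreal) \<Rightarrow> bool" where
  "has_cardinal_density B \<nu> \<longleftrightarrow> (\<exists>c :: 'a \<Rightarrow> ennreal. \<forall>A\<in>B. \<nu> A = (SUP x\<in>A. c x))"

end

theory Submission
  imports Defs
begin

lemma exhaust:
  assumes sf: "sigma_finite_measure m"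
    and F: "F \<subseteq> sets m" "{} \<in> F"
    and cu: "\<And>As::nat \<Rightarrow> 'a set. range As \<subseteq> F \<Longrightarrow> (\<Union>n. As n) \<in> F"
  shows "\<exists>G\<in>F. \<forall>A\<in>F. A - G \<in> null_sets m"
proof -
  interpret sigma_finite_measure m by fact
  obtain h where h_borel: "h \<in> borel_measurable m"
    and fin: "integral\<^sup>N m h \<noteq> \<infinity>" and pos: "\<And>x. x \<in> space m \<Longrightarrow> 0 < h x \<and> h x < \<infinity>"
    using Ex_finite_integrable_function by auto
  let ?H = "density m h"
  have "(\<integral>\<^sup>+x. h x * indicator (space m) x \<partial>m) = integral\<^sup>N m h"
    by (rule nn_integral_cong) (simp add: indicator_def)
  then have "emeasure ?H (space ?H) \<noteq> \<infinity>" using fin h_borel by (simp add: emeasure_density)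
  interpret H: finite_measure ?H
    by (intro finite_measureI) fact
  have Hnull: "A \<in> null_sets m" if "A \<in> sets m" "A \<in> null_sets ?H" for A
  proof -
    have "AE x in m. x \<in> A \<longrightarrow> h x = 0" using that null_sets_density_iff[OF h_borel] by auto
    moreover have "AE x in m. x \<in> space m" by auto
    ultimately have "AE x in m. x \<notin> A"
    proof eventually_elim
      case (elim x) then show ?case using pos[of x] by auto
    qed
    then show ?thesis using AE_iff_null_sets that(1) by blast
  qed
  define s where "s = (SUP A\<in>F. measure ?H A)"
  have bdd: "bdd_above ((\<lambda>A. measure ?H A) ` F)"
    by (rule bdd_aboveI[where M="measure ?H (space ?H)"]) (use H.bounded_measure in auto)
  have "\<exists>A\<in>F. s - 1 / (Suc n) < measure ?H A" for n :: nat
    unfolding s_def using F(2) bdd by (subst less_cSUP_iff[symmetric]) auto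
  then obtain A where A: "\<And>n. A n \<in> F" "\<And>n. s - 1 / (Suc n) < measure ?H (A n)" by metis
  define G where "G = (\<Union>n. A n)"
  have GF: "G \<in> F" unfolding G_def using cu A(1) by auto
  have Gs: "measure ?H G \<le> s" unfolding s_def using GF bdd by (rule cSUP_upper)
  have "measure ?H (A n) \<le> measure ?H G" for n
    using A(1) F(1) GF unfolding G_def by (intro H.finite_measure_mono) auto
  then have sn: "s - 1 / (Suc n) < measure ?H G" for n using A(2) less_le_trans by blast
  have sG: "s \<le> measure ?H G"
  proof (rule ccontr)
    assume "\<not> s \<le> measure ?H G"
    then have "0 < s - measure ?H G" by simp
    then obtain n where "inverse (real (Suc n)) < s - measure ?H G" using reals_Archimedean by blast
    with sn[of n] show False by (simp add: field_simps)
  qed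
  show ?thesis
  proof (intro bexI[OF _ GF] ballI)
    fix C assume C: "C \<in> F"
    have "range (\<lambda>n::nat. if n = 0 then C else G) \<subseteq> F" using C GF by auto
    from cu[OF this] have "(\<Union>n::nat. if n = 0 then C else G) \<in> F" .
    moreover have "(\<Union>n::nat. if n = 0 then C else G) = C \<union> G" by (auto split: if_splits)
    ultimately have CG: "C \<union> G \<in> F" by simp
    have "measure ?H (C \<union> G) \<le> s" unfolding s_def using CG bdd by (rule cSUP_upper)
    moreover have "measure ?H (C \<union> G) = measure ?H G + measure ?H (C - G)"
      using C GF F(1) by (subst H.finite_measure_Union[symmetric]) (auto simp: Un_commute Un_Diff_cancel)
    ultimately have "measure ?H (C - G) = 0" using Gs sG measure_nonneg[of ?H "C - G"] by linarith
    then have "C - G \<in> null_sets ?H" using C GF F(1) by (auto simp: H.emeasure_eq_measure null_sets_def)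
    then show "C - G \<in> null_sets m" using Hnull C GF F(1) by blast
  qed
qed

lemma maxitive_mono:
  assumes "maxitive B \<nu>" "A \<in> B" "C \<in> B" "A \<subseteq> C"
  shows "\<nu> A \<le> \<nu> C"
proof -
  have "\<nu> C = \<nu> (A \<union> C)" using assms(4) by (simp add: Un_absorb1)
  also have "\<dots> = max (\<nu> A) (\<nu> C)" using assms unfolding maxitive_def by blast
  finally show ?thesis by (metis max.cobounded1)
qed

lemma sm_nat_union:
  fixes As :: "nat \<Rightarrow> 'a set"
  assumes sa: "sigma_algebra E B" and sm: "sigma_maxitive B \<nu>"
    and As: "range As \<subseteq> B" "\<And>n. \<nu> (As n) \<le> t"
  shows "\<nu> (\<Union>n. As n) \<le> t"
proof -
  interpret sigma_algebra E B by fact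
  have mx: "maxitive B \<nu>" using sm unfolding sigma_maxitive_def by blast
  define Ps where "Ps n = (\<Union>i\<le>n. As i)" for n
  have PsB: "Ps n \<in> B" for n unfolding Ps_def using As(1) by auto
  have "\<nu> (Ps n) \<le> t" for n
  proof (induction n)
    case 0 then show ?case using As(2) by (simp add: Ps_def)
  next
    case (Suc n)
    have "Ps (Suc n) = As (Suc n) \<union> Ps n" by (auto simp: Ps_def atMost_Suc)
    then have "\<nu> (Ps (Suc n)) = max (\<nu> (As (Suc n))) (\<nu> (Ps n))"
      using mx PsB[of n] As(1) unfolding maxitive_def by (metis range_subsetD)
    then show ?case using Suc As(2)[of "Suc n"] by simp
  qed
  moreover have "incseq Ps" by (rule incseq_SucI) (auto simp: Ps_def atMost_Suc)
  then have "(\<lambda>n. \<nu> (Ps n)) \<longlonglongrightarrow> \<nu> (\<Union>n. Ps n)"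
    using sm PsB unfolding sigma_maxitive_def by blast
  moreover have "(\<Union>n. Ps n) = (\<Union>n. As n)" unfolding Ps_def by auto
  ultimately show ?thesis by (metis LIMSEQ_le_const2)
qed

lemma sm_countable_union:
  assumes sa: "sigma_algebra E B" and sm: "sigma_maxitive B \<nu>"
    and I: "countable I" and A: "\<And>i. i \<in> I \<Longrightarrow> A i \<in> B" "\<And>i. i \<in> I \<Longrightarrow> \<nu> (A i) \<le> t"
  shows "\<nu> (\<Union>i\<in>I. A i) \<le> t"
proof (cases "I = {}")
  case True then show ?thesis using sm unfolding sigma_maxitive_def maxitive_def by simp
next
  case False
  have "(\<Union>i\<in>I. A i) = (\<Union>n. A (from_nat_into I n))"
    using range_from_nat_into[OF False I] by (metis image_image)
  moreover have "\<nu> (\<Union>n. A (from_nat_into I n)) \<le> t"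
    using sm_nat_union[OF sa sm, of "\<lambda>n. A (from_nat_into I n)" t] A from_nat_into[OF False] by auto
  ultimately show ?thesis by simp
qed

lemma ennreal_rat_dense:
  fixes a b :: ennreal
  assumes "a < b"
  shows "\<exists>d\<in>ennreal ` \<rat>. a < d \<and> d < b"
proof -
  obtain c where c: "a < c" "c < b" using dense[OF assms] by blast
  then have "c < top" using top.not_eq_extremum by fastforce
  then obtain r where r: "c = ennreal r" "0 \<le> r" using ennreal_cases less_irrefl by metis
  have "a < top" using c by (metis order.strict_trans top.not_eq_extremum)
  then obtain x where x: "a = ennreal x" "0 \<le> x" using ennreal_cases less_irrefl by metis
  have "x < r" using c(1) r x by (simp add: ennreal_less_iff)
  then obtain q where q: "q \<in> \<rat>" "x < q" "q < r" using Rats_dense_in_real by blast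
  have "a < ennreal q" using x q by (simp add: ennreal_less_iff)
  moreover have "ennreal q < c" using x q r by (simp add: ennreal_less_iff)
  ultimately show ?thesis using q(1) c(2) by (meson image_eqI order.strict_trans)
qed

lemma Inf_pos_ge:
  fixes S :: ennreal
  shows "Inf {t. 0 < t \<and> S \<le> t} = S"
proof (rule antisym)
  show "Inf {t. 0 < t \<and> S \<le> t} \<le> S"
  proof (rule dense_ge)
    fix y assume "S < y"
    then show "Inf {t. 0 < t \<and> S \<le> t} \<le> y"
      by (intro Inf_lower) (auto simp: less_imp_le intro: le_less_trans[OF zero_le])
  qed
qed (auto intro: Inf_greatest)

theorem corollary3p4:
  fixes E :: "'a set" and B :: "'a set set" and \<nu> :: "'a set \<Rightarrow> ennreal"
  assumes "E \<noteq> {}"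
    and "sigma_algebra E B"
    and "sigma_maxitive B \<nu>"
    and "essential E B \<nu>"
  shows "autocontinuous E B \<nu> \<and>
         ((\<forall>N\<subseteq>E. negligible B \<nu> N \<longrightarrow> N = {}) \<longrightarrow> has_cardinal_density B \<nu>)"
proof -
  note sa = assms(2) and sm = assms(3)
  interpret sigma_algebra E B by fact
  have mx: "maxitive B \<nu>" using sm unfolding sigma_maxitive_def by blast
  obtain m where m: "space m = E" "sets m = B" "sigma_finite_measure m"
    "\<And>A. A \<in> B \<Longrightarrow> 0 < \<nu> A \<longleftrightarrow> 0 < emeasure m A"
    using assms(4) unfolding essential_def by blast
  define D where "D = ennreal ` \<rat>"
  have cD: "countable D" unfolding D_def by (simp add: countable_rat)
  have dense: "\<exists>d\<in>D. a < d \<and> d < b" if "a < b" for a b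
    using ennreal_rat_dense[OF that] unfolding D_def .
  have exG: "\<exists>G. G \<in> B \<and> \<nu> G \<le> d \<and> (\<forall>A\<in>B. \<nu> A \<le> d \<longrightarrow> \<nu> (A - G) = 0)" for d
  proof -
    define F where "F = {A\<in>B. \<nu> A \<le> d}"
    have "F \<subseteq> sets m" "{} \<in> F" using m(2) mx unfolding F_def maxitive_def by auto
    moreover have "(\<Union>n. As n) \<in> F" if "range As \<subseteq> F" for As :: "nat \<Rightarrow> 'a set"
      using that sm_nat_union[OF sa sm, of As d] unfolding F_def by auto
    ultimately obtain G where G: "G \<in> F" "\<forall>A\<in>F. A - G \<in> null_sets m"
      using exhaust[OF m(3)] by metis
    have "\<nu> (A - G) = 0" if "A \<in> B" "\<nu> A \<le> d" for A
    proof -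
      have "A - G \<in> null_sets m" using G that unfolding F_def by auto
      then have "emeasure m (A - G) = 0" by auto
      moreover have "A - G \<in> B" using G that unfolding F_def by auto
      ultimately show ?thesis using m(4)[of "A - G"] by auto
    qed
    then show ?thesis using G unfolding F_def by auto
  qed
  define G where "G d = (SOME G. G \<in> B \<and> \<nu> G \<le> d \<and> (\<forall>A\<in>B. \<nu> A \<le> d \<longrightarrow> \<nu> (A - G) = 0))" for d
  have G: "G d \<in> B" "\<nu> (G d) \<le> d" "\<And>A. A \<in> B \<Longrightarrow> \<nu> A \<le> d \<Longrightarrow> \<nu> (A - G d) = 0" for d
    using someI_ex[OF exG[of d]] unfolding G_def by blast+
  define f where "f x = Inf {d\<in>D. x \<in> G d}" for x
  define U where "U d = (\<Union>d'\<in>{d'\<in>D. d' < d}. G d')" for d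
  have U_iff: "x \<in> U d \<longleftrightarrow> f x < d" for x d
    unfolding U_def f_def Inf_less_iff by auto
  have UB: "U d \<in> B" for d
    unfolding U_def using G(1) cD by (intro countable_UN'') auto
  have Unu: "\<nu> (U d) \<le> d" for d
    unfolding U_def using G cD
    by (intro sm_countable_union[OF sa sm]) (auto intro: order.trans[OF _ less_imp_le])
  have fG: "f x \<le> d" if "d \<in> D" "x \<in> G d" for x d
    unfolding f_def using that by (auto intro: Inf_lower)
  have meas: "B_measurable E B f"
    unfolding B_measurable_def
  proof (intro allI impI)
    fix t :: ennreal
    have "{x\<in>E. t < f x} = (\<Union>d\<in>{d\<in>D. t < d}. E - U d)"
    proof safe
      fix x assume "x \<in> E" "t < f x"
      then obtain d where "d \<in> D" "t < d" "d < f x" using dense by blast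
      then show "x \<in> (\<Union>d\<in>{d\<in>D. t < d}. E - U d)" using \<open>x \<in> E\<close> U_iff by auto
    next
      fix x d assume "d \<in> D" "t < d" "x \<in> E" "x \<notin> U d"
      then show "t < f x" using U_iff by (meson not_less order.strict_trans2)
    qed
    moreover have "(\<Union>d\<in>{d\<in>D. t < d}. E - U d) \<in> B"
      using UB cD by (intro countable_UN'') auto
    ultimately show "{x\<in>E. t < f x} \<in> B" by simp
  qed
  have dens: "\<nu> A = ess_sup_nu E B \<nu> A f" if A: "A \<in> B" for A
  proof (rule antisym)
    show "\<nu> A \<le> ess_sup_nu E B \<nu> A f"
      unfolding ess_sup_nu_def
    proof (rule Inf_greatest, clarify)
      fix t assume t: "0 < t" "negligible B \<nu> (A \<inter> {x \<in> E. t < f x})"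
      then obtain N where N: "N \<in> B" "A \<inter> {x \<in> E. t < f x} \<subseteq> N" "\<nu> N = 0"
        unfolding negligible_def by blast
      show "\<nu> A \<le> t"
      proof (rule dense_ge)
        fix y assume "t < y"
        then obtain d where d: "d \<in> D" "t < d" "d < y" using dense by blast
        have AE: "A \<subseteq> E" using A sets_into_space by auto
        have "A \<subseteq> N \<union> U d"
        proof
          fix a assume "a \<in> A"
          show "a \<in> N \<union> U d"
          proof (cases "t < f a")
            case True then show ?thesis using N(2) \<open>a \<in> A\<close> AE by auto
          next
            case False then have "f a < d" using d(2) by (meson not_less order.strict_trans2)
            then show ?thesis using U_iff by auto
          qed
        qed
        moreover have "N \<union> U d \<in> B" using N(1) UB by auto
        ultimately have "\<nu> A \<le> \<nu> (N \<union> U d)" by (rule maxitive_mono[OF mx A, rotated])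
        also have "\<dots> = max (\<nu> N) (\<nu> (U d))" using mx N(1) UB unfolding maxitive_def by blast
        also have "\<dots> \<le> d" using N(3) Unu by simp
        finally show "\<nu> A \<le> y" using d(3) by simp
      qed
    qed
  next
    show "ess_sup_nu E B \<nu> A f \<le> \<nu> A"
    proof (rule ccontr)
      assume "\<not> ess_sup_nu E B \<nu> A f \<le> \<nu> A"
      then obtain d where d: "d \<in> D" "\<nu> A < d" "d < ess_sup_nu E B \<nu> A f"
        using dense by (meson not_le)
      have "A \<inter> {x \<in> E. d < f x} \<subseteq> A - G d" using fG[OF d(1)] by (auto dest: leD)
      moreover have "A - G d \<in> B" using A G(1) by auto
      moreover have "\<nu> (A - G d) = 0" using G(3)[OF A] d(2) by (simp add: less_imp_le)
      ultimately have "negligible B \<nu> (A \<inter> {x \<in> E. d < f x})" unfolding negligible_def by blast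
      moreover have "0 < d" using d(2) by (simp add: le_less_trans[OF zero_le])
      ultimately have "ess_sup_nu E B \<nu> A f \<le> d" unfolding ess_sup_nu_def by (auto intro: Inf_lower)
      then show False using d(3) by simp
    qed
  qed
  have part1: "autocontinuous E B \<nu>" unfolding autocontinuous_def using meas dens by blast
  have part2: "has_cardinal_density B \<nu>" if H: "\<forall>N\<subseteq>E. negligible B \<nu> N \<longrightarrow> N = {}"
    unfolding has_cardinal_density_def
  proof (intro exI[of _ f] ballI)
    fix A assume A: "A \<in> B"
    have AE: "A \<subseteq> E" using A sets_into_space by auto
    have "{t. 0 < t \<and> negligible B \<nu> (A \<inter> {x\<in>E. t < f x})} = {t. 0 < t \<and> (SUP x\<in>A. f x) \<le> t}"
    proof -
      have iff: "negligible B \<nu> (A \<inter> {x\<in>E. t < f x}) \<longleftrightarrow> (SUP x\<in>A. f x) \<le> t" for t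
      proof
        assume ng: "negligible B \<nu> (A \<inter> {x\<in>E. t < f x})"
        have "A \<inter> {x\<in>E. t < f x} \<subseteq> E" by blast
        then have "A \<inter> {x\<in>E. t < f x} = {}" by (rule H[rule_format, OF _ ng])
        then show "(SUP x\<in>A. f x) \<le> t" by (intro SUP_least) (metis (mono_tags, lifting) AE IntI empty_iff mem_Collect_eq not_less subsetD)
      next
        assume st: "(SUP x\<in>A. f x) \<le> t"
        have "A \<inter> {x\<in>E. t < f x} = {}"
        proof (intro equals0I)
          fix x assume "x \<in> A \<inter> {x\<in>E. t < f x}"
          then have "x \<in> A" "t < f x" by auto
          moreover have "f x \<le> (SUP x\<in>A. f x)" using \<open>x \<in> A\<close> by (rule SUP_upper)
          ultimately show False using st by (metis leD order.trans)
        qed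
        moreover have "negligible B \<nu> {}" unfolding negligible_def using mx unfolding maxitive_def by auto
        ultimately show "negligible B \<nu> (A \<inter> {x\<in>E. t < f x})" by simp
      qed
      show ?thesis by (simp only: iff)
    qed
    then show "\<nu> A = (SUP x\<in>A. f x)" using dens[OF A] Inf_pos_ge[of "SUP x\<in>A. f x"] unfolding ess_sup_nu_def by metis
  qed
  show ?thesis using part1 part2 by blast
qed

end
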